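(* Let $X=\{x_i\}_{i=1}^n\subset\mathbb{R}^d$, $0<\varepsilon<1$, and $T=\{(x-y)/\|x-y\|: x\ne y\in X\}\cup\{0\}$. Suppose $\Pi\in\mathbb{R}^{k\times d}$ has $\varepsilon$-convex hull distortion for $X$. Then $$\forall x,y\in\mathrm{conv}(T):\ |\langle\Pi x,\Pi y\rangle-\langle x,y\rangle|\le 6\varepsilon.$$
   Context: Norms and inner products are Euclidean. $\Pi$ has $\varepsilon$-convex hull distortion for $X$ if $\big|\|\Pi z\|-\|z\|\big|\le\varepsilon$ for all $z\in\mathrm{conv}(\{(x-y)/\|x-y\|: x\ne y\in X\})$. *)

theory Defs
  imports "HOL-Analysis.Analysis"
begin

definition unit_diffs :: "('a::real_normed_vector) set \<Rightarrow> 'a set" where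
  "unit_diffs X = {(x - y) /\<^sub>R norm (x - y) | x y. x \<in> X \<and> y \<in> X \<and> x \<noteq> y}"

definition convex_hull_distortion ::
  "real^'d^'k \<Rightarrow> real \<Rightarrow> (real^'d) set \<Rightarrow> bool" where
  "convex_hull_distortion P eps X \<longleftrightarrow>
     (\<forall>z \<in> convex hull (unit_diffs X). \<bar>norm (P *v z) - norm z\<bar> \<le> eps)"

end

theory Submission
  imports Defs
begin

lemma neg_mem_K:
  fixes X :: "(real^'d) set"
  assumes "x \<in> convex hull (unit_diffs X \<union> {0})"
  shows "- x \<in> convex hull (unit_diffs X \<union> {0})"
proof -
  have sym: "(\<lambda>v. (-1) *\<^sub>R v) ` (unit_diffs X \<union> {0}) = unit_diffs X \<union> {0}"
  proof -
    have "(\<lambda>v. (-1) *\<^sub>R v) ` (unit_diffs X \<union> {0}) \<subseteq> unit_diffs X \<union> {0}" for X :: "(real^'d) set"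
    proof
      fix w assume "w \<in> (\<lambda>v. (-1) *\<^sub>R v) ` (unit_diffs X \<union> {0})"
      then obtain v where v: "v \<in> unit_diffs X \<union> {0}" "w = - v" by auto
      show "w \<in> unit_diffs X \<union> {0}"
      proof (cases "v = 0")
        case True thus ?thesis using v by simp
      next
        case False
        then obtain a b where ab: "a \<in> X" "b \<in> X" "a \<noteq> b" "v = (a - b) /\<^sub>R norm (a - b)"
          using v unfolding unit_diffs_def by auto
        have "w = (b - a) /\<^sub>R norm (b - a)" using ab v by (simp add: norm_minus_commute algebra_simps)
        thus ?thesis using ab unfolding unit_diffs_def by auto
      qed
    qed
    moreover have "unit_diffs X \<union> {0} \<subseteq> (\<lambda>v. (-1) *\<^sub>R v) ` (unit_diffs X \<union> {0})"
    proof
      fix w assume "w \<in> unit_diffs X \<union> {0}"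
      then have "-w \<in> unit_diffs X \<union> {0}" using calculation by force
      then show "w \<in> (\<lambda>v. (-1) *\<^sub>R v) ` (unit_diffs X \<union> {0})"
        by (intro image_eqI[of _ _ "-w"]) auto
    qed
    ultimately show ?thesis by blast
  qed
  have "(-1) *\<^sub>R x \<in> (\<lambda>v. (-1) *\<^sub>R v) ` (convex hull (unit_diffs X \<union> {0}))"
    using assms by blast
  then have "(-1) *\<^sub>R x \<in> convex hull (unit_diffs X \<union> {0})"
    by (metis convex_hull_scaling sym)
  thus ?thesis by simp
qed

lemma norm_le1_K:
  fixes X :: "(real^'d) set"
  assumes "x \<in> convex hull (unit_diffs X \<union> {0})"
  shows "norm x \<le> 1"
proof -
  have "unit_diffs X \<union> {0} \<subseteq> cball 0 1"
    unfolding unit_diffs_def by auto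
  then have "convex hull (unit_diffs X \<union> {0}) \<subseteq> cball 0 1"
    by (simp add: hull_minimal)
  thus ?thesis using assms by auto
qed

lemma dist_K:
  fixes X :: "(real^'d) set" and P :: "real^'d^'k"
  assumes "convex_hull_distortion P eps X" "0 < eps"
    and "x \<in> convex hull (unit_diffs X \<union> {0})"
  shows "\<bar>norm (P *v x) - norm x\<bar> \<le> eps"
proof (cases "unit_diffs X = {}")
  case True
  then have "x = 0" using assms(3) by simp
  thus ?thesis using assms(2) by simp
next
  case False
  have "x \<in> convex hull (insert 0 (unit_diffs X))" using assms(3) by simp
  then obtain u v b where uv: "u \<ge> 0" "v \<ge> 0" "u + v = 1" "b \<in> convex hull (unit_diffs X)"
    "x = u *\<^sub>R 0 + v *\<^sub>R b"
    unfolding convex_hull_insert[OF False] by blast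
  have hb: "\<bar>norm (P *v b) - norm b\<bar> \<le> eps"
    using assms(1) uv(4) unfolding convex_hull_distortion_def by blast
  have "\<bar>norm (P *v x) - norm x\<bar> = v * \<bar>norm (P *v b) - norm b\<bar>"
    using uv by (simp add: matrix_vector_mult_scaleR abs_mult right_diff_distrib[symmetric])
  also have "\<dots> \<le> 1 * eps" using hb uv
    by (intro mult_mono) auto
  finally show ?thesis by simp
qed

lemma sq_K:
  fixes X :: "(real^'d) set" and P :: "real^'d^'k"
  assumes "convex_hull_distortion P eps X" "0 < eps" "eps < 1"
    and "x \<in> convex hull (unit_diffs X \<union> {0})"
  shows "\<bar>(P *v x) \<bullet> (P *v x) - x \<bullet> x\<bar> \<le> 3 * eps"
proof -
  have d: "\<bar>norm (P *v x) - norm x\<bar> \<le> eps" using dist_K assms by blast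
  have n: "norm x \<le> 1" using norm_le1_K assms(4) by blast
  have n2: "norm (P *v x) \<le> 1 + eps" using d n by linarith
  have "(P *v x) \<bullet> (P *v x) - x \<bullet> x = (norm (P *v x) - norm x) * (norm (P *v x) + norm x)"
    by (simp add: dot_square_norm power2_eq_square algebra_simps)
  then have "\<bar>(P *v x) \<bullet> (P *v x) - x \<bullet> x\<bar> = \<bar>norm (P *v x) - norm x\<bar> * (norm (P *v x) + norm x)"
    by (simp add: abs_mult)
  also have "\<dots> \<le> eps * (2 + eps)"
    using d n n2 by (intro mult_mono) auto
  also have "\<dots> \<le> 3 * eps" using assms(2,3) by (simp add: algebra_simps)
  finally show ?thesis .
qed

theorem lemmaB3:
  fixes X :: "(real^'d) set" and P :: "real^'d^'k" and eps :: real
  assumes "finite X"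
    and "0 < eps" and "eps < 1"
    and "convex_hull_distortion P eps X"
  shows "\<forall>x \<in> convex hull (unit_diffs X \<union> {0}). \<forall>y \<in> convex hull (unit_diffs X \<union> {0}).
           \<bar>(P *v x) \<bullet> (P *v y) - x \<bullet> y\<bar> \<le> 6 * eps"
proof (intro ballI)
  fix x y assume x: "x \<in> convex hull (unit_diffs X \<union> {0})" and y: "y \<in> convex hull (unit_diffs X \<union> {0})"
  let ?K = "convex hull (unit_diffs X \<union> {0})"
  have cK: "convex ?K" by simp
  have my: "- y \<in> ?K" using neg_mem_K y by blast
  define a where "a = (1/2) *\<^sub>R x + (1/2) *\<^sub>R y"
  define b where "b = (1/2) *\<^sub>R x + (1/2) *\<^sub>R (- y)"
  have aK: "a \<in> ?K" unfolding a_def using convexD[OF cK x y] by simp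
  have bK: "b \<in> ?K" unfolding b_def using convexD[OF cK x my] by simp
  have ha: "\<bar>(P *v a) \<bullet> (P *v a) - a \<bullet> a\<bar> \<le> 3 * eps" using sq_K assms aK by blast
  have hb: "\<bar>(P *v b) \<bullet> (P *v b) - b \<bullet> b\<bar> \<le> 3 * eps" using sq_K assms bK by blast
  have xe: "x = a + b" unfolding a_def b_def by (simp add: algebra_simps scaleR_2[symmetric])
  have ye: "y = a - b" unfolding a_def b_def by (simp add: algebra_simps scaleR_2[symmetric])
  have "(P *v x) \<bullet> (P *v y) - x \<bullet> y
      = ((P *v a) \<bullet> (P *v a) - a \<bullet> a) - ((P *v b) \<bullet> (P *v b) - b \<bullet> b)"
    unfolding xe ye by (simp add: matrix_vector_right_distrib matrix_vector_mult_diff_distrib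
        inner_add_left inner_add_right inner_diff_left inner_diff_right inner_commute)
  thus "\<bar>(P *v x) \<bullet> (P *v y) - x \<bullet> y\<bar> \<le> 6 * eps" using ha hb by linarith
qed

end
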